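(* Let $m$ and $k$ be positive integers with $m > k$, and let $A \in \mathcal A_k$. Then the collection of numerical semigroups with multiplicity $m$ and type $(A; k)$ is exactly the collection of sets of the form (a disjoint union) \[ \Lambda = \{0\} \cup (m + A) \cup \bigl(2m + ((A + A)\cap[0, k])\bigr) \cup B \cup [2m + k + 1, \infty) \] where $B$ is any subset of $[m+k+1, 2m+k-1] \setminus (2m + A + A)$.
   Context: A numerical semigroup is a subset $\Lambda\subseteq\mathbb{N}_0$ closed under addition, containing $0$, with finite complement in $\mathbb{N}_0$. Its multiplicity $m$ is its smallest nonzero element and its Frobenius number $f$ is the largest element of $\mathbb{N}_0\setminus\Lambda$. For integers $a\le b$, $[a,b]=\{a,\dots,b\}$, and $[a,\infty)=\{a,a+1,\dots\}$. For $A\subseteq\mathbb{Z}$ and $b\in\mathbb{Z}$, $A+A=\{a_1+a_2:a_1,a_2\in A\}$ and $b+A=\{a+b:a\in A\}$. For a positive integer $k$, $\mathcal A_k = \{A \subseteq [0, k-1] : 0 \in A \text{ and } k \notin A + A\}$. A numerical semigroup $\Lambda$ with multiplicity $m$ and Frobenius number $f$ satisfying $2m<f<3m$ has type $(A;k)$, where $k<m$ is a positive integer and $A\in\mathcal A_k$, if $f=2m+k$ and $\Lambda\cap[m,m+k]=A+m$. *)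

theory Defs
  imports Main
begin

definition sumset :: "nat set \<Rightarrow> nat set \<Rightarrow> nat set" where
  "sumset A B = {a + b | a b. a \<in> A \<and> b \<in> B}"

definition numerical_semigroup :: "nat set \<Rightarrow> bool" where
  "numerical_semigroup S \<longleftrightarrow> 0 \<in> S \<and> (\<forall>x\<in>S. \<forall>y\<in>S. x + y \<in> S) \<and> finite (UNIV - S)"

definition multiplicity :: "nat set \<Rightarrow> nat" where
  "multiplicity S = (LEAST x. x \<in> S \<and> x \<noteq> 0)"

text \<open>Frobenius number: largest non-element (meaningful when the complement is nonempty).\<close>
definition frobenius :: "nat set \<Rightarrow> nat" where
  "frobenius S = Max (UNIV - S)"

definition A_family :: "nat \<Rightarrow> nat set set" where
  "A_family k = {A. A \<subseteq> {0..k-1} \<and> 0 \<in> A \<and> k \<notin> sumset A A}"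

definition has_type :: "nat set \<Rightarrow> nat set \<Rightarrow> nat \<Rightarrow> bool" where
  "has_type S A k \<longleftrightarrow>
     (let m = multiplicity S; f = frobenius S in
       UNIV - S \<noteq> {} \<and> 2*m < f \<and> f < 3*m \<and> 0 < k \<and> k < m \<and> A \<in> A_family k \<and>
       f = 2*m + k \<and> S \<inter> {m..m+k} = (\<lambda>a. a + m) ` A)"

end

theory Submission
  imports Defs
begin

lemma sumset_iff: "x \<in> sumset A B \<longleftrightarrow> (\<exists>a b. a \<in> A \<and> b \<in> B \<and> x = a + b)"
  unfolding sumset_def by blast

lemma dir1:
  fixes m k :: nat and A S :: "nat set"
  assumes k0: "0 < k" and km: "k < m" and AF: "A \<in> A_family k"
    and ns: "numerical_semigroup S" and mu: "multiplicity S = m" and ht: "has_type S A k"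
  shows "\<exists>B. B \<subseteq> {m+k+1..2*m+k-1} - (\<lambda>x. x + 2*m) ` sumset A A \<and>
              S = {0} \<union> (\<lambda>a. a + m) ` A \<union> (\<lambda>x. x + 2*m) ` (sumset A A \<inter> {0..k})
                  \<union> B \<union> {2*m+k+1..}"
proof -
  have z: "0 \<in> S" and cl: "\<And>x y. x \<in> S \<Longrightarrow> y \<in> S \<Longrightarrow> x + y \<in> S" and fin: "finite (UNIV - S)"
    using ns unfolding numerical_semigroup_def by auto
  have fr: "frobenius S = 2*m+k" and ne: "UNIV - S \<noteq> {}" and part: "S \<inter> {m..m+k} = (\<lambda>a. a + m) ` A"
    using ht mu unfolding has_type_def Let_def by auto
  have AA: "A \<subseteq> {0..k-1}" "0 \<in> A" "k \<notin> sumset A A" using AF unfolding A_family_def by auto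
  have fnot: "2*m+k \<notin> S" using Max_in[OF fin ne] fr unfolding frobenius_def by auto
  have big: "x \<in> S" if "x > 2*m+k" for x
  proof (rule ccontr)
    assume "x \<notin> S" then have "x \<le> Max (UNIV - S)" using Max_ge[OF fin] by auto
    then show False using that fr unfolding frobenius_def by auto
  qed
  have ex: "\<exists>x. x \<in> S \<and> x \<noteq> 0" using big[of "2*m+k+1"] by auto
  have mS: "m \<in> S" using LeastI_ex[OF ex] mu unfolding multiplicity_def by auto
  have small: "x \<notin> S" if "0 < x" "x < m" for x
    using not_less_Least[of x "\<lambda>x. x \<in> S \<and> x \<noteq> 0"] that mu unfolding multiplicity_def by auto
  have Ain: "a + m \<in> S" if "a \<in> A" for a using part that by auto
  define B where "B = S \<inter> {m+k+1..2*m+k-1} - (\<lambda>x. x + 2*m) ` sumset A A"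
  have "S = {0} \<union> (\<lambda>a. a + m) ` A \<union> (\<lambda>x. x + 2*m) ` (sumset A A \<inter> {0..k}) \<union> B \<union> {2*m+k+1..}"
  proof (intro equalityI subsetI)
    fix x assume xS: "x \<in> S"
    consider "x = 0" | "x \<in> {m..m+k}" | "x \<in> {m+k+1..2*m+k-1}" | "x = 2*m+k" | "x \<ge> 2*m+k+1"
      using small[of x] xS by force
    then show "x \<in> {0} \<union> (\<lambda>a. a + m) ` A \<union> (\<lambda>x. x + 2*m) ` (sumset A A \<inter> {0..k}) \<union> B \<union> {2*m+k+1..}"
    proof cases
      case 2 then show ?thesis using part xS by blast
    next
      case 3
      show ?thesis
      proof (cases "x \<in> (\<lambda>x. x + 2*m) ` sumset A A")
        case True
        then obtain y where y: "y \<in> sumset A A" "x = y + 2*m" by auto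
        then have "y \<le> k" using 3 by auto
        then show ?thesis using y by auto
      next
        case False then show ?thesis using 3 xS unfolding B_def by auto
      qed
    next
      case 4 then show ?thesis using fnot xS by auto
    qed auto
  next
    fix x assume "x \<in> {0} \<union> (\<lambda>a. a + m) ` A \<union> (\<lambda>x. x + 2*m) ` (sumset A A \<inter> {0..k}) \<union> B \<union> {2*m+k+1..}"
    then consider "x = 0" | "x \<in> (\<lambda>a. a + m) ` A" | "x \<in> (\<lambda>x. x + 2*m) ` (sumset A A \<inter> {0..k})"
      | "x \<in> B" | "x \<ge> 2*m+k+1" by blast
    then show "x \<in> S"
    proof cases
      case 3
      then obtain a b where "a \<in> A" "b \<in> A" "x = (a + m) + (b + m)" by (auto simp: sumset_iff)
      then show ?thesis using cl Ain by auto
    next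
      case 5 then show ?thesis using big by auto
    qed (auto simp: z Ain B_def)
  qed
  moreover have "B \<subseteq> {m+k+1..2*m+k-1} - (\<lambda>x. x + 2*m) ` sumset A A" unfolding B_def by auto
  ultimately show ?thesis by blast
qed

lemma mem_img: "(x::nat) \<in> (\<lambda>x. x + 2*m) ` (sumset A A \<inter> {0..k}) \<longleftrightarrow> (\<exists>a\<in>A. \<exists>b\<in>A. a + b \<le> k \<and> x = a + b + 2*m)"
proof
  assume "x \<in> (\<lambda>x. x + 2*m) ` (sumset A A \<inter> {0..k})"
  then obtain y a b where "a \<in> A" "b \<in> A" "y = a + b" "y \<le> k" "x = y + 2*m" unfolding sumset_def by auto
  then show "\<exists>a\<in>A. \<exists>b\<in>A. a + b \<le> k \<and> x = a + b + 2*m" by blast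
next
  assume "\<exists>a\<in>A. \<exists>b\<in>A. a + b \<le> k \<and> x = a + b + 2*m"
  then obtain a b where "a \<in> A" "b \<in> A" "a + b \<le> k" "x = a + b + 2*m" by blast
  moreover have "a + b \<in> sumset A A" unfolding sumset_def using \<open>a \<in> A\<close> \<open>b \<in> A\<close> by blast
  ultimately show "x \<in> (\<lambda>x. x + 2*m) ` (sumset A A \<inter> {0..k})" by auto
qed

lemma dir2:
  fixes m k :: nat and A B :: "nat set"
  assumes k0: "0 < k" and km: "k < m" and AF: "A \<in> A_family k"
    and Bs: "B \<subseteq> {m+k+1..2*m+k-1} - (\<lambda>x. x + 2*m) ` sumset A A"
    and L: "L = {0} \<union> (\<lambda>a. a + m) ` A \<union> (\<lambda>x. x + 2*m) ` (sumset A A \<inter> {0..k}) \<union> B \<union> {2*m+k+1..}"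
  shows "numerical_semigroup L \<and> multiplicity L = m \<and> has_type L A k"
proof -
  have AA: "A \<subseteq> {0..k-1}" "0 \<in> A" "k \<notin> sumset A A" using AF unfolding A_family_def by auto
  have Ale: "a < k" if "a \<in> A" for a using AA(1) that k0 by fastforce
  have mem: "x \<in> L \<longleftrightarrow> x = 0 \<or> (\<exists>a\<in>A. x = a + m) \<or> (\<exists>a\<in>A. \<exists>b\<in>A. a + b \<le> k \<and> x = a + b + 2*m)
     \<or> x \<in> B \<or> x \<ge> 2*m+k+1" for x
  proof -
    have "x \<in> (\<lambda>x. x + 2*m) ` (sumset A A \<inter> {0..k}) \<longleftrightarrow> (\<exists>a\<in>A. \<exists>b\<in>A. a + b \<le> k \<and> x = a + b + 2*m)"
      by (rule mem_img)
    moreover have "x \<in> (\<lambda>a. a + m) ` A \<longleftrightarrow> (\<exists>a\<in>A. x = a + m)" by auto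
    ultimately show ?thesis unfolding L by auto
  qed
  have Bb: "x \<in> B \<Longrightarrow> m+k+1 \<le> x \<and> x \<le> 2*m+k-1" for x using Bs by auto
  have ge: "x \<in> L \<Longrightarrow> x \<noteq> 0 \<Longrightarrow> x \<ge> m" for x using mem[of x] Bb[of x] by auto
  have ge2: "x \<in> L \<Longrightarrow> x \<noteq> 0 \<Longrightarrow> (\<exists>a\<in>A. x = a + m) \<or> x \<ge> m+k+1" for x
    using mem[of x] Bb[of x] km by auto
  have nf: "2*m+k \<notin> L"
  proof
    assume "2*m+k \<in> L"
    then consider "\<exists>a\<in>A. 2*m+k = a + m" | "\<exists>a\<in>A. \<exists>b\<in>A. a + b \<le> k \<and> 2*m+k = a + b + 2*m"
      | "2*m+k \<in> B" using mem[of "2*m+k"] k0 km by auto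
    then show False
    proof cases
      case 1 then show ?thesis using Ale km by force
    next
      case 2 then obtain a b where "a\<in>A" "b\<in>A" "k = a+b" by auto
      then show ?thesis using AA(3) by (auto simp: sumset_iff)
    next
      case 3 then show ?thesis using Bb by fastforce
    qed
  qed
  have closed: "x + y \<in> L" if "x \<in> L" "y \<in> L" for x y
  proof (cases "x = 0 \<or> y = 0")
    case True then show ?thesis using that by auto
  next
    case False
    then have "x \<noteq> 0" "y \<noteq> 0" by auto
    show ?thesis
    proof (cases "(\<exists>a\<in>A. x = a + m) \<and> (\<exists>a\<in>A. y = a + m)")
      case True
      then obtain a b where ab: "a\<in>A" "b\<in>A" "x = a+m" "y = b+m" by auto
      show ?thesis
      proof (cases "a + b \<le> k")
        case True then show ?thesis using ab mem[of "x+y"] by auto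
      next
        case False then show ?thesis using ab mem[of "x+y"] by auto
      qed
    next
      case False
      then have "x \<ge> m+k+1 \<or> y \<ge> m+k+1" using ge2 that \<open>x\<noteq>0\<close> \<open>y\<noteq>0\<close> by blast
      moreover have "x \<ge> m" "y \<ge> m" using ge that \<open>x\<noteq>0\<close> \<open>y\<noteq>0\<close> by auto
      ultimately show ?thesis using mem[of "x+y"] by auto
    qed
  qed
  have sub: "UNIV - L \<subseteq> {..2*m+k}" using mem by force
  have fin: "finite (UNIV - L)" using finite_subset[OF sub] by auto
  have ns: "numerical_semigroup L" unfolding numerical_semigroup_def using closed fin mem by auto
  have mL: "m \<in> L" using mem[of m] AA(2) by auto
  have mu: "multiplicity L = m" unfolding multiplicity_def
  proof (rule Least_equality)
    show "m \<in> L \<and> m \<noteq> 0" using mL km by auto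
  next
    fix y assume "y \<in> L \<and> y \<noteq> 0" then show "m \<le> y" using ge by auto
  qed
  have ne: "UNIV - L \<noteq> {}" using nf by auto
  have fr: "frobenius L = 2*m+k" unfolding frobenius_def
  proof (rule Max_eqI[OF fin])
    fix y assume "y \<in> UNIV - L" then show "y \<le> 2*m+k" using sub by auto
  qed (use nf in auto)
  have part: "L \<inter> {m..m+k} = (\<lambda>a. a + m) ` A"
  proof (intro equalityI subsetI)
    fix x assume x: "x \<in> L \<inter> {m..m+k}"
    then have "x \<noteq> 0" using km by auto
    then show "x \<in> (\<lambda>a. a + m) ` A" using ge2[of x] x by auto
  next
    fix x assume "x \<in> (\<lambda>a. a + m) ` A"
    then obtain a where "a \<in> A" "x = a + m" by auto
    then show "x \<in> L \<inter> {m..m+k}" using mem[of x] Ale by fastforce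
  qed
  have "has_type L A k" unfolding has_type_def Let_def mu fr using ne k0 km AF part by auto
  then show ?thesis using ns mu by auto
qed

theorem proposition3p3:
  fixes m k :: nat and A :: "nat set"
  assumes "0 < k" and "k < m" and "A \<in> A_family k"
  shows "{S. numerical_semigroup S \<and> multiplicity S = m \<and> has_type S A k} =
         {L. \<exists>B. B \<subseteq> {m+k+1..2*m+k-1} - (\<lambda>x. x + 2*m) ` sumset A A \<and>
              L = {0} \<union> (\<lambda>a. a + m) ` A \<union> (\<lambda>x. x + 2*m) ` (sumset A A \<inter> {0..k})
                  \<union> B \<union> {2*m+k+1..}}"
proof (intro equalityI subsetI)
  fix S assume h: "S \<in> {S. numerical_semigroup S \<and> multiplicity S = m \<and> has_type S A k}"
  have "numerical_semigroup S" "multiplicity S = m" "has_type S A k" using h by (simp_all only: mem_Collect_eq)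
  note d = dir1[OF assms this]
  from d show "S \<in> {L. \<exists>B. B \<subseteq> {m+k+1..2*m+k-1} - (\<lambda>x. x + 2*m) ` sumset A A \<and>
              L = {0} \<union> (\<lambda>a. a + m) ` A \<union> (\<lambda>x. x + 2*m) ` (sumset A A \<inter> {0..k})
                  \<union> B \<union> {2*m+k+1..}}" unfolding mem_Collect_eq .
next
  fix L assume h: "L \<in> {L. \<exists>B. B \<subseteq> {m+k+1..2*m+k-1} - (\<lambda>x. x + 2*m) ` sumset A A \<and>
              L = {0} \<union> (\<lambda>a. a + m) ` A \<union> (\<lambda>x. x + 2*m) ` (sumset A A \<inter> {0..k})
                  \<union> B \<union> {2*m+k+1..}}"
  then obtain B where "B \<subseteq> {m+k+1..2*m+k-1} - (\<lambda>x. x + 2*m) ` sumset A A"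
     "L = {0} \<union> (\<lambda>a. a + m) ` A \<union> (\<lambda>x. x + 2*m) ` (sumset A A \<inter> {0..k})
                  \<union> B \<union> {2*m+k+1..}" unfolding mem_Collect_eq by (elim exE conjE)
  note d = dir2[OF assms this]
  from d show "L \<in> {S. numerical_semigroup S \<and> multiplicity S = m \<and> has_type S A k}" unfolding mem_Collect_eq .
qed

end
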